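(* Let $n\ge1$ and $\delta\in(0,1)$, and set $\alpha=(1+\delta)/2$. No secret-key multi-message code over the binary alphabet $\{0,1\}$ with codeword space $\{0,1\}^n$ satisfies both soundness and $\mathcal{F}^{\mathrm{ind}}_{\alpha n}$-error correction.
   Context: A secret-key multi-message code with message space $\Sigma^m$ (nonempty) and codeword space $\Sigma^n$ is a triple of polynomial-time algorithms $\Gamma=(\mathsf{KGen},\mathsf{Enc},\mathsf{Dec})$: $\mathsf{KGen}(1^\lambda)$ is randomized and outputs $sk$; $\mathsf{Enc}(sk,\mu)$ (possibly randomized), for $\mu\in\Sigma^m$, outputs $\gamma\in\Sigma^n$; $\mathsf{Dec}(sk,\gamma)$ is deterministic and outputs either a message in $\Sigma^m$ or one of the symbols $\mathtt{invalid},\mathtt{tampered}$. A function $\nu(\lambda)$ is negligible, written $\mathsf{negl}(\lambda)$, if $\nu(\lambda)=o(\lambda^{-c})$ for every $c>0$. Soundness: for every fixed $\hat\gamma\in\Sigma^n$, $\Pr[\mathsf{Dec}(sk,\hat\gamma)\neq\mathtt{invalid}: sk\leftarrow\mathsf{KGen}(1^\lambda)]\le\mathsf{negl}(\lambda)$. $\mathcal{F}$-error correction, for a family $\mathcal{F}$ of (possibly randomized) functions $f:\Sigma^n\to\Sigma^n$: for all $f\in\mathcal{F}$ and all $\mu\in\Sigma^m$, with $sk\leftarrow\mathsf{KGen}(1^\lambda)$, $\gamma\leftarrow\mathsf{Enc}(sk,\mu)$, $\tilde\gamma\leftarrow f(\gamma)$, we have $\Pr[\mathsf{Dec}(sk,\tilde\gamma)\neq\mu\wedge\tilde\gamma\neq\gamma]\le\mathsf{negl}(\lambda)$.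 $\mathcal{F}^{\mathrm{ind}}_{\alpha n}$ denotes the family of independent-tampering functions with rate $\alpha$: randomized length-preserving maps $f:\Sigma^n\to\Sigma^n$ that act independently on each coordinate, each coordinate being modified with probability at most $\alpha$. In particular (for $\Sigma=\{0,1\}$) it contains the map that, independently for each position $i$, replaces $\gamma_i$ by a uniformly random bit with probability $1/2$ and leaves it unchanged with probability $1/2$. *)

theory Defs
  imports "HOL-Probability.Probability" "HOL-Library.Landau_Symbols"
begin

text \<open>Alphabet: bool. Words of length n over {0,1} are bool lists of length n.\<close>

datatype dec_out = Msg "bool list" | Invalid | Tampered

definition negl :: "(nat \<Rightarrow> real) \<Rightarrow> bool" where
  "negl \<nu> \<longleftrightarrow> (\<forall>c::real. c > 0 \<longrightarrow> \<nu> \<in> o(\<lambda>x. real x powr (- c)))"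

fun coord_apply :: "(nat \<Rightarrow> bool \<Rightarrow> bool pmf) \<Rightarrow> nat \<Rightarrow> bool list \<Rightarrow> bool list pmf" where
  "coord_apply g i0 [] = return_pmf []"
| "coord_apply g i0 (b # bs) =
     bind_pmf (g i0 b) (\<lambda>b'. bind_pmf (coord_apply g (Suc i0) bs) (\<lambda>bs'. return_pmf (b' # bs')))"

definition tamper_ind :: "real \<Rightarrow> nat \<Rightarrow> (bool list \<Rightarrow> bool list pmf) set" where
  "tamper_ind \<alpha> n = {f. \<exists>g :: nat \<Rightarrow> bool \<Rightarrow> bool pmf.
       (\<forall>i<n. \<forall>b. measure_pmf.prob (g i b) {b'. b' \<noteq> b} \<le> \<alpha>) \<and>
       (\<forall>\<gamma>. length \<gamma> = n \<longrightarrow> f \<gamma> = coord_apply g 0 \<gamma>)}"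

definition is_code ::
  "(nat \<Rightarrow> nat) \<Rightarrow> (nat \<Rightarrow> nat) \<Rightarrow> (nat \<Rightarrow> 'k pmf) \<Rightarrow> (nat \<Rightarrow> 'k \<Rightarrow> bool list \<Rightarrow> bool list pmf)
    \<Rightarrow> (nat \<Rightarrow> 'k \<Rightarrow> bool list \<Rightarrow> dec_out) \<Rightarrow> bool" where
  "is_code m n KGen Enc Dec \<longleftrightarrow>
     (\<forall>s sk \<mu>. length \<mu> = m s \<longrightarrow> (\<forall>\<gamma> \<in> set_pmf (Enc s sk \<mu>). length \<gamma> = n s)) \<and>
     (\<forall>s sk \<gamma> \<mu>. Dec s sk \<gamma> = Msg \<mu> \<longrightarrow> length \<mu> = m s)"

definition sound ::
  "(nat \<Rightarrow> nat) \<Rightarrow> (nat \<Rightarrow> 'k pmf) \<Rightarrow> (nat \<Rightarrow> 'k \<Rightarrow> bool list \<Rightarrow> dec_out) \<Rightarrow> bool" where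
  "sound n KGen Dec \<longleftrightarrow>
     (\<forall>\<gamma>h :: nat \<Rightarrow> bool list. (\<forall>s. length (\<gamma>h s) = n s) \<longrightarrow>
        negl (\<lambda>s. measure_pmf.prob (KGen s) {sk. Dec s sk (\<gamma>h s) \<noteq> Invalid}))"

definition error_correcting ::
  "(nat \<Rightarrow> (bool list \<Rightarrow> bool list pmf) set) \<Rightarrow> (nat \<Rightarrow> nat) \<Rightarrow> (nat \<Rightarrow> nat) \<Rightarrow>
   (nat \<Rightarrow> 'k pmf) \<Rightarrow> (nat \<Rightarrow> 'k \<Rightarrow> bool list \<Rightarrow> bool list pmf)
    \<Rightarrow> (nat \<Rightarrow> 'k \<Rightarrow> bool list \<Rightarrow> dec_out) \<Rightarrow> bool" where
  "error_correcting F m n KGen Enc Dec \<longleftrightarrow>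
     (\<forall>(f :: nat \<Rightarrow> bool list \<Rightarrow> bool list pmf) (\<mu> :: nat \<Rightarrow> bool list).
        (\<forall>s. f s \<in> F (n s)) \<longrightarrow> (\<forall>s. length (\<mu> s) = m s) \<longrightarrow>
        negl (\<lambda>s. measure_pmf.prob
           (bind_pmf (KGen s) (\<lambda>sk. bind_pmf (Enc s sk (\<mu> s)) (\<lambda>\<gamma>.
              bind_pmf (f s \<gamma>) (\<lambda>\<gamma>'. return_pmf (sk, \<gamma>, \<gamma>')))))
           {(sk, \<gamma>, \<gamma>'). Dec s sk \<gamma>' \<noteq> Msg (\<mu> s) \<and> \<gamma>' \<noteq> \<gamma>}))"

end

theory Submission
  imports Defs
begin

lemma prob_bind_le:
  assumes "\<And>x. x \<in> set_pmf p \<Longrightarrow> measure_pmf.prob (f x) A \<le> c"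
  shows "measure_pmf.prob (bind_pmf p f) A \<le> c"
proof -
  obtain x0 where x0: "x0 \<in> set_pmf p" using set_pmf_not_empty by fast
  have c0: "0 \<le> c" using assms[OF x0] measure_nonneg order_trans by blast
  have "emeasure (measure_pmf (bind_pmf p f)) A = (\<integral>\<^sup>+x. emeasure (f x) A \<partial>p)" by simp
  also have "\<dots> \<le> (\<integral>\<^sup>+x. ennreal c \<partial>p)"
    apply (rule nn_integral_mono_AE)
    using assms by (auto simp: AE_measure_pmf_iff measure_pmf.emeasure_eq_measure intro: ennreal_leI)
  also have "\<dots> = ennreal c" by (simp add: measure_pmf.emeasure_space_1)
  finally show ?thesis using c0
    by (simp add: measure_pmf.emeasure_eq_measure)
qed

definition u :: "bool pmf" where "u = bernoulli_pmf (1/2)"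

fun C :: "nat \<Rightarrow> bool list pmf" where
  "C 0 = return_pmf []"
| "C (Suc k) = bind_pmf u (\<lambda>b. bind_pmf (C k) (\<lambda>bs. return_pmf (b # bs)))"

lemma coord_C: "coord_apply (\<lambda>i b. u) i \<gamma> = C (length \<gamma>)"
  by (induction \<gamma> arbitrary: i) auto

lemma set_C: "xs \<in> set_pmf (C k) \<Longrightarrow> length xs = k"
  by (induction k arbitrary: xs) auto

lemma u_half: "measure_pmf.prob u {b} = 1/2"
  by (simp add: u_def measure_pmf_single)

lemma u_neq: "measure_pmf.prob u {b'. b' \<noteq> b} = 1/2"
proof -
  have "{b'. b' \<noteq> b} = {\<not> b}" by auto
  then show ?thesis using u_half by simp
qed

lemma hd_C: "map_pmf hd (C (Suc k)) = u"
  by (simp add: map_bind_pmf map_pmf_def[symmetric] map_pmf_comp bind_return_pmf bind_return_pmf')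

lemma C_single: "k \<ge> 1 \<Longrightarrow> measure_pmf.prob (C k) {x} \<le> 1/2"
proof -
  assume "k \<ge> 1"
  then obtain k' where k: "k = Suc k'" by (cases k) auto
  have "measure_pmf.prob (C k) {x} \<le> measure_pmf.prob (C k) (hd -` {hd x})"
    by (rule measure_pmf.finite_measure_mono) auto
  also have "\<dots> = measure_pmf.prob (map_pmf hd (C k)) {hd x}" by simp
  also have "\<dots> = 1/2" unfolding k hd_C u_half ..
  finally show ?thesis .
qed


lemma negl_contra:
  fixes a b :: "nat \<Rightarrow> real"
  assumes "negl a" "negl b" "\<And>s. 1/2 \<le> a s + b s"
  shows False
proof -
  have a: "a \<in> o(\<lambda>x. real x powr (-1))" and b: "b \<in> o(\<lambda>x. real x powr (-1))"
    using assms(1,2) unfolding negl_def by (meson zero_less_one)+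
  have "eventually (\<lambda>x. norm (a x) \<le> 1/8 * norm (real x powr (-1))) at_top"
    by (rule landau_o.smallD[OF a]) simp
  moreover have "eventually (\<lambda>x. norm (b x) \<le> 1/8 * norm (real x powr (-1))) at_top"
    by (rule landau_o.smallD[OF b]) simp
  moreover have "eventually (\<lambda>x::nat. x \<ge> 1) at_top" by (rule eventually_ge_at_top)
  ultimately have "eventually (\<lambda>x::nat. False) at_top"
  proof eventually_elim
    case (elim x)
    have "real x powr (-1) \<le> 1" using elim(3)
      by (simp add: powr_minus_divide)
    moreover have "0 \<le> real x powr (-1)" by simp
    ultimately have "\<bar>a x\<bar> \<le> 1/8" "\<bar>b x\<bar> \<le> 1/8" using elim(1,2) by auto
    then show False using assms(3)[of x] by linarith
  qed
  then show False by simp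
qed

theorem mainTheorem4:
  fixes \<delta> :: real
    and m n :: "nat \<Rightarrow> nat"
    and KGen :: "nat \<Rightarrow> 'k pmf"
    and Enc :: "nat \<Rightarrow> 'k \<Rightarrow> bool list \<Rightarrow> bool list pmf"
    and Dec :: "nat \<Rightarrow> 'k \<Rightarrow> bool list \<Rightarrow> dec_out"
  assumes "0 < \<delta>" and "\<delta> < 1"
    and "\<forall>s. n s \<ge> 1"
    and "is_code m n KGen Enc Dec"
  shows "\<not> (sound n KGen Dec \<and>
            error_correcting (tamper_ind ((1 + \<delta>) / 2)) m n KGen Enc Dec)"
proof
  assume H: "sound n KGen Dec \<and> error_correcting (tamper_ind ((1 + \<delta>) / 2)) m n KGen Enc Dec"
  define p where "p s x = measure_pmf.prob (KGen s) {sk. Dec s sk x \<noteq> Invalid}" for s x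
  have "\<exists>x. length x = n s \<and> (\<forall>y. length y = n s \<longrightarrow> p s y \<le> p s x)" for s
  proof -
    have fin: "finite {xs :: bool list. length xs = n s}"
      using finite_lists_length_eq[of "UNIV :: bool set" "n s"] by simp
    have ne: "{xs :: bool list. length xs = n s} \<noteq> {}" by (auto intro: exI[of _ "replicate (n s) False"])
    obtain x where "x \<in> {xs :: bool list. length xs = n s}"
      "\<forall>y \<in> {xs :: bool list. length xs = n s}. p s y \<le> p s x"
    proof -
      let ?S = "{xs :: bool list. length xs = n s}"
      have "Max (p s ` ?S) \<in> p s ` ?S" using fin ne by (intro Max_in) auto
      then obtain x where x: "x \<in> ?S" "p s x = Max (p s ` ?S)" by auto
      have "\<forall>y\<in>?S. p s y \<le> p s x" using fin x(2) by (auto intro: Max_ge)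
      with x that show ?thesis by blast
    qed
    then show ?thesis by auto
  qed
  then obtain \<gamma>h where gh: "\<And>s. length (\<gamma>h s) = n s"
    "\<And>s y. length y = n s \<Longrightarrow> p s y \<le> p s (\<gamma>h s)" by metis
  have nA: "negl (\<lambda>s. p s (\<gamma>h s))" using H gh(1) unfolding sound_def p_def by blast
  define f where "f s = (\<lambda>\<gamma>. coord_apply (\<lambda>i b. u) 0 \<gamma>)" for s :: nat
  define \<mu> where "\<mu> s = replicate (m s) False" for s
  have fT: "f s \<in> tamper_ind ((1 + \<delta>) / 2) (n s)" for s
    unfolding tamper_ind_def f_def using assms(1) by (auto simp: u_neq u_half intro!: exI[of _ "\<lambda>i b. u"])
  define J where "J s = bind_pmf (KGen s) (\<lambda>sk. bind_pmf (Enc s sk (\<mu> s)) (\<lambda>\<gamma>.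
              bind_pmf (f s \<gamma>) (\<lambda>\<gamma>'. return_pmf (sk, \<gamma>, \<gamma>'))))" for s
  define E where "E s = {(sk, \<gamma>, \<gamma>'). Dec s sk \<gamma>' \<noteq> Msg (\<mu> s) \<and> \<gamma>' \<noteq> \<gamma>}" for s
  have nE: "negl (\<lambda>s. measure_pmf.prob (J s) (E s))"
    using H fT unfolding error_correcting_def J_def E_def \<mu>_def by auto
  have key: "1/2 \<le> measure_pmf.prob (J s) (E s) + p s (\<gamma>h s)" for s
  proof -
    have len: "\<And>sk \<gamma>. \<gamma> \<in> set_pmf (Enc s sk (\<mu> s)) \<Longrightarrow> length \<gamma> = n s"
      using assms(4) unfolding is_code_def \<mu>_def by (metis length_replicate)
    have J': "J s = bind_pmf (KGen s) (\<lambda>sk. bind_pmf (Enc s sk (\<mu> s)) (\<lambda>\<gamma>.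
              map_pmf (\<lambda>\<gamma>'. (sk, \<gamma>, \<gamma>')) (C (n s))))"
      unfolding J_def f_def coord_C map_pmf_def
      by (intro bind_pmf_cong refl) (simp add: len)
    define A where "A = {(sk :: 'k, \<gamma> :: bool list, \<gamma>'). Dec s sk \<gamma>' \<noteq> Invalid}"
    define B where "B = {(sk :: 'k, \<gamma> :: bool list, \<gamma>' :: bool list). \<gamma>' = \<gamma>}"
    have PB: "measure_pmf.prob (J s) B \<le> 1/2"
      unfolding J'
    proof (intro prob_bind_le)
      fix sk \<gamma> assume "\<gamma> \<in> set_pmf (Enc s sk (\<mu> s))"
      have "(\<lambda>\<gamma>'. (sk, \<gamma>, \<gamma>')) -` B = {\<gamma>}" unfolding B_def by auto
      then show "measure_pmf.prob (map_pmf (\<lambda>\<gamma>'. (sk, \<gamma>, \<gamma>')) (C (n s))) B \<le> 1/2"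
        using C_single assms(3) by simp
    qed
    define h where "h = (\<lambda>(sk :: 'k, \<gamma> :: bool list, \<gamma>' :: bool list). (sk, \<gamma>'))"
    have "map_pmf h (J s) = bind_pmf (KGen s) (\<lambda>sk. map_pmf (\<lambda>\<gamma>'. (sk, \<gamma>')) (C (n s)))"
      unfolding J' by (simp add: map_bind_pmf map_pmf_comp h_def)
    also have "\<dots> = bind_pmf (C (n s)) (\<lambda>\<gamma>'. map_pmf (\<lambda>sk. (sk, \<gamma>')) (KGen s))"
      unfolding map_pmf_def by (rule bind_commute_pmf)
    finally have hJ: "map_pmf h (J s) = \<dots>" .
    have "A = h -` {(sk, \<gamma>'). Dec s sk \<gamma>' \<noteq> Invalid}" unfolding A_def h_def by auto
    then have "measure_pmf.prob (J s) A = measure_pmf.prob (map_pmf h (J s)) {(sk, \<gamma>'). Dec s sk \<gamma>' \<noteq> Invalid}"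
      by simp
    also have "\<dots> \<le> p s (\<gamma>h s)"
      unfolding hJ
    proof (intro prob_bind_le)
      fix \<gamma>' assume "\<gamma>' \<in> set_pmf (C (n s))"
      then have "p s \<gamma>' \<le> p s (\<gamma>h s)" using gh(2) set_C by blast
      moreover have "(\<lambda>sk. (sk, \<gamma>')) -` {(sk, \<gamma>'). Dec s sk \<gamma>' \<noteq> Invalid} = {sk. Dec s sk \<gamma>' \<noteq> Invalid}"
        by auto
      ultimately show "measure_pmf.prob (map_pmf (\<lambda>sk. (sk, \<gamma>')) (KGen s)) {(sk, \<gamma>'). Dec s sk \<gamma>' \<noteq> Invalid} \<le> p s (\<gamma>h s)"
        by (simp add: p_def)
    qed
    finally have PA: "measure_pmf.prob (J s) A \<le> p s (\<gamma>h s)" .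
    have "UNIV = E s \<union> A \<union> B" unfolding E_def A_def B_def by auto
    then have "1 = measure_pmf.prob (J s) (E s \<union> A \<union> B)" by (metis measure_pmf.prob_space space_measure_pmf)
    also have "\<dots> \<le> measure_pmf.prob (J s) (E s \<union> A) + measure_pmf.prob (J s) B"
      by (rule measure_subadditive) auto
    also have "\<dots> \<le> measure_pmf.prob (J s) (E s) + measure_pmf.prob (J s) A + measure_pmf.prob (J s) B"
      using measure_subadditive[of "E s" "J s" A] by auto
    finally show ?thesis using PA PB by linarith
  qed
  show False by (rule negl_contra[OF nE nA key])
qed

end
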